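(* Let $\mathcal H$ and $\mathcal K$ be complex Hilbert spaces and $k \in \mathbb N$ with $k < \dim \mathcal H$. Let $\phi \colon \mathcal F_s(\mathcal H) \to \mathcal F_s(\mathcal K)$ be a linear map such that $\phi(\mathcal P_k(\mathcal H)) \subset \mathcal P_f(\mathcal K)$. Then there exists $m \in \mathbb N \cup \{0\}$ with $m \le \dim \mathcal K$ such that $\phi(\mathcal P_k(\mathcal H)) \subset \mathcal P_m(\mathcal K)$.
   Context: For a complex Hilbert space $\mathcal H$, $\mathcal F_s(\mathcal H)$ is the real vector space of bounded self-adjoint finite-rank operators on $\mathcal H$. A projection is a self-adjoint idempotent bounded operator; $\mathcal P_k(\mathcal H)$ is the set of projections of rank $k$ and $\mathcal P_f(\mathcal H)$ the set of all finite-rank projections. *)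

theory Defs
  imports "HOL-Analysis.Analysis"
begin

text \<open>The inner product is linear in the second and conjugate-linear in the
  first argument; the norm is the one induced by the inner product.\<close>

class complex_inner = real_normed_vector +
  fixes scaleC :: "complex \<Rightarrow> 'a \<Rightarrow> 'a"  (infixr \<open>*\<^sub>C\<close> 75)
  fixes cinner :: "'a \<Rightarrow> 'a \<Rightarrow> complex"
  assumes scaleC_add_right: "c *\<^sub>C (x + y) = c *\<^sub>C x + c *\<^sub>C y"
    and scaleC_add_left: "(c + d) *\<^sub>C x = c *\<^sub>C x + d *\<^sub>C x"
    and scaleC_scaleC: "c *\<^sub>C (d *\<^sub>C x) = (c * d) *\<^sub>C x"
    and scaleC_one: "1 *\<^sub>C x = x"
    and scaleC_of_real: "complex_of_real r *\<^sub>C x = r *\<^sub>R x"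
    and cinner_commute: "cinner x y = cnj (cinner y x)"
    and cinner_add_right: "cinner x (y + z) = cinner x y + cinner x z"
    and cinner_scaleC_right: "cinner x (c *\<^sub>C y) = c * cinner x y"
    and cinner_pos: "Im (cinner x x) = 0 \<and> Re (cinner x x) \<ge> 0"
    and cinner_eq_zero: "cinner x x = 0 \<longleftrightarrow> x = 0"
    and norm_cinner: "norm x = sqrt (Re (cinner x x))"

class chilbert_space = complex_inner + complete_space

abbreviation cspan :: "'a::complex_inner set \<Rightarrow> 'a set"
  where "cspan \<equiv> module.span scaleC"

abbreviation cdependent :: "'a::complex_inner set \<Rightarrow> bool"
  where "cdependent \<equiv> module.dependent scaleC"

text \<open>Dimension comparisons, valid also for infinite-dimensional spaces\<close>

text \<open>"n < dim H": H contains n+1 complex-linearly independent vectors.\<close>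
definition dim_greater :: "'a::complex_inner itself \<Rightarrow> nat \<Rightarrow> bool"
  where "dim_greater _ n \<longleftrightarrow>
     (\<exists>B::'a set. finite B \<and> card B = Suc n \<and> \<not> cdependent B)"

text \<open>"n \<le> dim H": H contains n complex-linearly independent vectors.\<close>
definition dim_at_least :: "'a::complex_inner itself \<Rightarrow> nat \<Rightarrow> bool"
  where "dim_at_least _ n \<longleftrightarrow>
     (\<exists>B::'a set. finite B \<and> card B = n \<and> \<not> cdependent B)"

definition bounded_clinear :: "('a::complex_inner \<Rightarrow> 'b::complex_inner) \<Rightarrow> bool"
  where "bounded_clinear A \<longleftrightarrow>
     (\<forall>x y. A (x + y) = A x + A y) \<and> (\<forall>c x. A (c *\<^sub>C x) = c *\<^sub>C A x) \<and>
     (\<exists>K. \<forall>x. norm (A x) \<le> norm x * K)"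

definition selfadjoint :: "('a::complex_inner \<Rightarrow> 'a) \<Rightarrow> bool"
  where "selfadjoint A \<longleftrightarrow> (\<forall>x y. cinner (A x) y = cinner x (A y))"

definition finite_rank :: "('a::complex_inner \<Rightarrow> 'a) \<Rightarrow> bool"
  where "finite_rank A \<longleftrightarrow> (\<exists>B. finite B \<and> cspan B = range A)"

definition has_rank :: "('a::complex_inner \<Rightarrow> 'a) \<Rightarrow> nat \<Rightarrow> bool"
  where "has_rank A k \<longleftrightarrow>
     (\<exists>B. finite B \<and> card B = k \<and> \<not> cdependent B \<and> cspan B = range A)"

definition Fs :: "('a::complex_inner \<Rightarrow> 'a) set"
  where "Fs = {A. bounded_clinear A \<and> selfadjoint A \<and> finite_rank A}"

definition is_projection :: "('a::complex_inner \<Rightarrow> 'a) \<Rightarrow> bool"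
  where "is_projection P \<longleftrightarrow> bounded_clinear P \<and> selfadjoint P \<and> P \<circ> P = P"

definition Pk :: "nat \<Rightarrow> ('a::complex_inner \<Rightarrow> 'a) set"
  where "Pk k = {P. is_projection P \<and> has_rank P k}"

definition Pf :: "('a::complex_inner \<Rightarrow> 'a) set"
  where "Pf = {P. is_projection P \<and> finite_rank P}"

text \<open>Real-linear maps F_s(H) \<rightarrow> F_s(K) (F_s is a real vector space under pointwise
  operations).\<close>
definition Fs_linear_map ::
    "(('a::complex_inner \<Rightarrow> 'a) \<Rightarrow> ('b::complex_inner \<Rightarrow> 'b)) \<Rightarrow> bool"
  where "Fs_linear_map \<phi> \<longleftrightarrow>
     \<phi> ` Fs \<subseteq> Fs \<and>
     (\<forall>A\<in>Fs. \<forall>B\<in>Fs. \<phi> (\<lambda>x. A x + B x) = (\<lambda>y. \<phi> A y + \<phi> B y)) \<and>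
     (\<forall>A\<in>Fs. \<forall>r::real. \<phi> (\<lambda>x. r *\<^sub>R A x) = (\<lambda>y. r *\<^sub>R \<phi> A y))"

end

theory Submission
  imports Defs
begin


interpretation cvs: vector_space "scaleC :: complex \<Rightarrow> 'a::complex_inner \<Rightarrow> 'a"
  by unfold_locales (simp_all add: scaleC_add_right scaleC_add_left scaleC_scaleC scaleC_one)

abbreviation cdim :: "'a::complex_inner set \<Rightarrow> nat" where "cdim \<equiv> vector_space.dim scaleC"

section \<open>Inner product basics\<close>

lemma cinner_add_left: "cinner (x + y) z = cinner x z + cinner y z"
  by (metis cinner_commute cinner_add_right complex_cnj_add)

lemma cinner_scaleC_left: "cinner (c *\<^sub>C x) y = cnj c * cinner x y"
  by (metis cinner_commute cinner_scaleC_right complex_cnj_mult)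

lemma scaleR_scaleC: "r *\<^sub>R x = complex_of_real r *\<^sub>C x"
  by (simp add: scaleC_of_real)

lemma cinner_zero_right[simp]: "cinner x 0 = 0"
  using cinner_add_right[of x 0 0] by simp

lemma cinner_zero_left[simp]: "cinner 0 x = 0"
  using cinner_add_left[of 0 0 x] by simp

lemma cinner_minus_right: "cinner x (- y) = - cinner x y"
  using cinner_add_right[of x y "-y"] by (simp add: eq_neg_iff_add_eq_0 add.commute)

lemma cinner_minus_left: "cinner (- x) y = - cinner x y"
  using cinner_add_left[of x "-x" y] by (simp add: eq_neg_iff_add_eq_0 add.commute)

lemma cinner_diff_right: "cinner x (y - z) = cinner x y - cinner x z"
  using cinner_add_right[of x y "-z"] by (simp add: cinner_minus_right)

lemma cinner_diff_left: "cinner (x - y) z = cinner x z - cinner y z"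
  using cinner_add_left[of x "-y" z] by (simp add: cinner_minus_left)

lemma cinner_scaleR_right: "cinner x (r *\<^sub>R y) = complex_of_real r * cinner x y"
  by (simp add: scaleR_scaleC cinner_scaleC_right)

lemma cinner_scaleR_left: "cinner (r *\<^sub>R x) y = complex_of_real r * cinner x y"
  by (simp add: scaleR_scaleC cinner_scaleC_left)

lemma cinner_self_real: "cinner x x = complex_of_real ((norm x)\<^sup>2)"
proof -
  have "Im (cinner x x) = 0" "Re (cinner x x) \<ge> 0" using cinner_pos by auto
  then show ?thesis by (simp add: norm_cinner complex_eq_iff)
qed

lemma cinner_self_zero_iff[simp]: "cinner x x = 0 \<longleftrightarrow> x = 0"
  by (rule cinner_eq_zero)

lemma norm_scaleC: "norm (c *\<^sub>C x) = cmod c * norm x"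
proof -
  have cc: "cnj c * c = complex_of_real ((cmod c)\<^sup>2)"
    by (metis complex_norm_square mult.commute)
  have "cinner (c *\<^sub>C x) (c *\<^sub>C x) = (cnj c * c) * cinner x x"
    by (simp add: cinner_scaleC_left cinner_scaleC_right mult.assoc)
  then have "cinner (c *\<^sub>C x) (c *\<^sub>C x) = complex_of_real ((cmod c)\<^sup>2) * cinner x x"
    by (simp only: cc)
  then have "complex_of_real ((norm (c *\<^sub>C x))\<^sup>2) = complex_of_real (((cmod c) * norm x)\<^sup>2)"
    by (simp only: cinner_self_real of_real_mult power_mult_distrib)
  then have "(norm (c *\<^sub>C x))\<^sup>2 = ((cmod c) * norm x)\<^sup>2"
    by (simp only: of_real_eq_iff)
  then show ?thesis
    by (simp add: power2_eq_iff_nonneg)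
qed

lemma scaleC_minus_right: "c *\<^sub>C (- x) = - (c *\<^sub>C x)"
  by (rule cvs.scale_minus_right)

lemma scaleC_diff_right: "c *\<^sub>C (x - y) = c *\<^sub>C x - c *\<^sub>C y"
  by (rule cvs.scale_right_diff_distrib)

lemma cinner_ext: assumes "\<And>z. cinner z a = cinner z b" shows "a = b"
proof -
  have "cinner (a - b) (a - b) = 0"
    using assms[of "a - b"] by (simp add: cinner_diff_right)
  then show ?thesis by simp
qed

lemma pythagoras:
  assumes "cinner x y = 0"
  shows "(norm (x + y))\<^sup>2 = (norm x)\<^sup>2 + (norm y)\<^sup>2"
proof -
  have "cinner y x = 0" using assms cinner_commute[of y x] by simp
  then have "cinner (x + y) (x + y) = cinner x x + cinner y y"
    using assms by (simp add: cinner_add_left cinner_add_right)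
  then have "complex_of_real ((norm (x + y))\<^sup>2) = complex_of_real ((norm x)\<^sup>2 + (norm y)\<^sup>2)"
    by (simp only: cinner_self_real of_real_add)
  then show ?thesis by (simp only: of_real_eq_iff)
qed

section \<open>Operators\<close>

definition clin :: "('a::complex_inner \<Rightarrow> 'a) \<Rightarrow> bool" where
  "clin A \<longleftrightarrow> (\<forall>x y. A (x + y) = A x + A y) \<and> (\<forall>c x. A (c *\<^sub>C x) = c *\<^sub>C A x)"

lemma bounded_clinear_clin: "bounded_clinear A \<Longrightarrow> clin A"
  by (simp add: bounded_clinear_def clin_def)

lemma clin_module_hom: "clin A \<Longrightarrow> module_hom scaleC scaleC A"
  unfolding module_hom_iff clin_def using cvs.module_axioms by blast

lemma clin_add: "clin A \<Longrightarrow> A (x + y) = A x + A y" by (simp add: clin_def)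
lemma clin_scaleC: "clin A \<Longrightarrow> A (c *\<^sub>C x) = c *\<^sub>C A x" by (simp add: clin_def)
lemma clin_diff: "clin A \<Longrightarrow> A (x - y) = A x - A y"
  using module_hom.diff[OF clin_module_hom] by blast
lemma clin_zero: "clin A \<Longrightarrow> A 0 = 0"
  using module_hom.zero[OF clin_module_hom] by blast
lemma clin_scaleR: "clin A \<Longrightarrow> A (r *\<^sub>R x) = r *\<^sub>R A x"
  by (simp add: scaleR_scaleC clin_scaleC)

lemma clin_subspace_range: "clin A \<Longrightarrow> cvs.subspace (range A)"
  using module_hom.subspace_image[OF clin_module_hom, of A UNIV] by simp

definition rk1 :: "'a::complex_inner \<Rightarrow> 'a \<Rightarrow> 'a" where
  "rk1 y = (\<lambda>x. cinner y x *\<^sub>C y)"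

lemma clin_rk1: "clin (rk1 y)"
  by (simp add: clin_def rk1_def cinner_add_right cinner_scaleC_right scaleC_add_left scaleC_scaleC)

lemma selfadjoint_rk1: "selfadjoint (rk1 y)"
  unfolding selfadjoint_def rk1_def
  by (metis cinner_commute cinner_scaleC_left cinner_scaleC_right complex_cnj_cnj mult.commute)

lemma proj_norm_le:
  assumes "clin P" "selfadjoint P" "\<And>x. P (P x) = P x"
  shows "norm (P x) \<le> norm x"
proof -
  have "cinner (P x) (x - P x) = 0"
    using assms by (simp add: cinner_diff_right selfadjoint_def)
  then have "(norm (P x + (x - P x)))\<^sup>2 = (norm (P x))\<^sup>2 + (norm (x - P x))\<^sup>2"
    by (rule pythagoras)
  then have "(norm (P x))\<^sup>2 \<le> (norm x)\<^sup>2" by simp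
  then show ?thesis by (simp add: power2_le_iff_abs_le)
qed

lemma is_projection_iff:
  "is_projection P \<longleftrightarrow> clin P \<and> selfadjoint P \<and> (\<forall>x. P (P x) = P x)"
proof
  assume "is_projection P" then show "clin P \<and> selfadjoint P \<and> (\<forall>x. P (P x) = P x)"
    unfolding is_projection_def by (auto simp: bounded_clinear_clin dest: fun_cong)
next
  assume a: "clin P \<and> selfadjoint P \<and> (\<forall>x. P (P x) = P x)"
  then have "\<forall>x. norm (P x) \<le> norm x * 1" using proj_norm_le by auto
  then have "\<exists>K. \<forall>x. norm (P x) \<le> norm x * K" by blast
  moreover have "P \<circ> P = P" using a by (simp add: fun_eq_iff)
  ultimately show "is_projection P"
    using a unfolding is_projection_def bounded_clinear_def clin_def by (intro conjI) auto
qed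

lemma proj_idem: "is_projection P \<Longrightarrow> P (P x) = P x"
  by (simp add: is_projection_iff)
lemma proj_clin: "is_projection P \<Longrightarrow> clin P"
  by (simp add: is_projection_iff)
lemma proj_sa: "is_projection P \<Longrightarrow> cinner (P x) y = cinner x (P y)"
  by (simp add: is_projection_iff selfadjoint_def)
lemma proj_range: "is_projection P \<Longrightarrow> x \<in> range P \<longleftrightarrow> P x = x"
  by (metis proj_idem rangeE rangeI)
lemma proj_norm: "is_projection P \<Longrightarrow> norm (P x) \<le> norm x"
  by (simp add: is_projection_iff proj_norm_le selfadjoint_def)

lemma pythagoras_proj:
  assumes "is_projection P"
  shows "(norm x)\<^sup>2 = (norm (P x))\<^sup>2 + (norm (x - P x))\<^sup>2"
proof -
  have "cinner (P x) (x - P x) = 0"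
    using assms by (simp add: cinner_diff_right proj_sa[symmetric] proj_idem)
  then have "(norm (P x + (x - P x)))\<^sup>2 = (norm (P x))\<^sup>2 + (norm (x - P x))\<^sup>2"
    by (rule pythagoras)
  then show ?thesis by simp
qed

lemma proj_add_rank1:
  assumes P: "is_projection P" and e: "cinner e e = 1" and Pe: "P e = 0"
  shows "is_projection (\<lambda>x. P x + rk1 e x)"
    and "range (\<lambda>x. P x + rk1 e x) = cspan (insert e (range P))"
proof -
  have cl: "clin P" using P by (simp add: proj_clin)
  have eP: "cinner e (P x) = 0" for x
    using proj_sa[OF P, of e x] Pe by simp
  have idem: "P (P x + rk1 e x) + rk1 e (P x + rk1 e x) = P x + rk1 e x" for x
    using clin_add[OF cl] clin_scaleC[OF cl] proj_idem[OF P]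
    by (simp add: rk1_def Pe eP cinner_add_right cinner_scaleC_right e)
  have "clin (\<lambda>x. P x + rk1 e x)"
    using cl clin_rk1[of e] unfolding clin_def by (simp add: scaleC_add_right)
  moreover have "selfadjoint (\<lambda>x. P x + rk1 e x)"
    using P selfadjoint_rk1[of e]
    by (simp add: selfadjoint_def cinner_add_left cinner_add_right proj_sa)
  ultimately show "is_projection (\<lambda>x. P x + rk1 e x)"
    using idem by (simp add: is_projection_iff)
  show "range (\<lambda>x. P x + rk1 e x) = cspan (insert e (range P))"
  proof
    show "range (\<lambda>x. P x + rk1 e x) \<subseteq> cspan (insert e (range P))"
    proof
      fix y assume "y \<in> range (\<lambda>x. P x + rk1 e x)"
      then obtain x where "y = P x + cinner e x *\<^sub>C e" by (auto simp: rk1_def)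
      then show "y \<in> cspan (insert e (range P))"
      proof -
        have "P x \<in> cspan (insert e (range P))" by (rule cvs.span_base) simp
        moreover have "cinner e x *\<^sub>C e \<in> cspan (insert e (range P))"
          by (rule cvs.span_scale, rule cvs.span_base) simp
        ultimately show ?thesis using \<open>y = _\<close> by (simp add: cvs.span_add)
      qed
    qed
  next
    have sub: "cvs.subspace (range P)" using cl by (rule clin_subspace_range)
    show "cspan (insert e (range P)) \<subseteq> range (\<lambda>x. P x + rk1 e x)"
    proof
      fix y assume "y \<in> cspan (insert e (range P))"
      then obtain c where "y - c *\<^sub>C e \<in> cspan (range P)"
        by (auto simp: cvs.span_insert)
      moreover have "cspan (range P) = range P" using sub by (rule cvs.span_eq_iff[THEN iffD2])
      ultimately have r: "y - c *\<^sub>C e \<in> range P" by simp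
      define r' where "r' = y - c *\<^sub>C e"
      have y: "y = r' + c *\<^sub>C e" by (simp add: r'_def)
      have Pr: "P r' = r'" using r proj_range[OF P] by (simp add: r'_def)
      have er: "cinner e r' = 0" using eP[of r'] Pr by simp
      have "P y + rk1 e y = y"
        using clin_add[OF cl] clin_scaleC[OF cl]
        by (simp add: y Pr Pe rk1_def cinner_add_right cinner_scaleC_right er e)
      then have "y = (\<lambda>x. P x + rk1 e x) y" by simp
      then show "y \<in> range (\<lambda>x. P x + rk1 e x)" by (rule range_eqI)
    qed
  qed
qed




section \<open>Dimension facts\<close>

definition fdim :: "'a::complex_inner set \<Rightarrow> bool" where
  "fdim S \<longleftrightarrow> (\<exists>F. finite F \<and> S \<subseteq> cspan F)"

lemma fdim_subset: "fdim T \<Longrightarrow> S \<subseteq> T \<Longrightarrow> fdim S"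
  unfolding fdim_def by blast

lemma basis_fin:
  assumes "cvs.subspace S" "fdim S"
  obtains B where "finite B" "\<not> cdependent B" "cspan B = S" "card B = cdim S"
proof -
  obtain F where F: "finite F" "S \<subseteq> cspan F" using assms(2) by (auto simp: fdim_def)
  obtain B where B: "B \<subseteq> S" "\<not> cdependent B" "S \<subseteq> cspan B" "card B = cdim S"
    using cvs.basis_exists[of S] by blast
  have "finite B" using cvs.independent_span_bound[OF F(1) B(2)] B(1) F(2) by blast
  moreover have "cspan B = S"
    using B(1,3) cvs.span_minimal[OF B(1) assms(1)] by blast
  ultimately show ?thesis using that B by blast
qed

lemma dim_le_sub:
  assumes "S \<subseteq> T" "cvs.subspace T" "fdim T"
  shows "cdim S \<le> cdim T"
proof -
  obtain C where C: "finite C" "\<not> cdependent C" "cspan C = T" "card C = cdim T"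
    using basis_fin[OF assms(2,3)] by blast
  have "cdim S \<le> card C" using assms(1) C by (intro cvs.dim_le_card) auto
  then show ?thesis using C by simp
qed

lemma dim_insert_sub:
  assumes "cvs.subspace S" "fdim S" "e \<notin> S"
  shows "cdim (cspan (insert e S)) = Suc (cdim S)"
proof -
  obtain B where B: "finite B" "\<not> cdependent B" "cspan B = S" "card B = cdim S"
    using basis_fin[OF assms(1,2)] by blast
  have ind: "\<not> cdependent (insert e B)"
    using B assms(3) by (intro cvs.independent_insertI) auto
  have BS: "B \<subseteq> S" using B(3) cvs.span_superset[of B] by blast
  have eB: "e \<notin> B" using BS assms(3) by blast
  have "cspan (insert e B) = cspan (insert e S)"
  proof -
    have "insert e S \<subseteq> cspan (insert e B)"
      using B(3) cvs.span_mono[of B "insert e B"] cvs.span_superset[of "insert e B"] by auto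
    moreover have "insert e B \<subseteq> cspan (insert e S)"
      using BS cvs.span_superset[of "insert e S"] by auto
    ultimately show ?thesis by (simp add: cvs.span_eq)
  qed
  then have "cdim (cspan (insert e S)) = card (insert e B)"
    using cvs.dim_span_eq_card_independent[OF ind] by simp
  then show ?thesis using B eB by simp
qed

lemma fdim_span_insert: "fdim S \<Longrightarrow> fdim (cspan (insert e S))"
proof -
  assume "fdim S"
  then obtain F where F: "finite F" "S \<subseteq> cspan F" by (auto simp: fdim_def)
  have "insert e S \<subseteq> cspan (insert e F)"
    using F(2) cvs.span_mono[of F "insert e F"] cvs.span_superset[of "insert e F"] by auto
  then have "cspan (insert e S) \<subseteq> cspan (insert e F)"
    using cvs.span_minimal by blast
  then show ?thesis using F(1) by (auto simp: fdim_def)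
qed

lemma dim_less_sub:
  assumes "S \<subseteq> T" "S \<noteq> T" "cvs.subspace S" "cvs.subspace T" "fdim T"
  shows "cdim S < cdim T"
proof -
  obtain t where t: "t \<in> T" "t \<notin> S" using assms(1,2) by blast
  have fS: "fdim S" using assms(1,5) fdim_subset by blast
  have "cdim (cspan (insert t S)) = Suc (cdim S)"
    using dim_insert_sub[OF assms(3) fS t(2)] .
  moreover have "cspan (insert t S) \<subseteq> T"
    using assms(1) t(1) cvs.span_minimal[OF _ assms(4), of "insert t S"] by blast
  then have "cdim (cspan (insert t S)) \<le> cdim T"
    using assms(4,5) by (rule dim_le_sub)
  ultimately show ?thesis by simp
qed

lemma dim_eq_sub:
  assumes "S \<subseteq> T" "cdim S = cdim T" "cvs.subspace S" "cvs.subspace T" "fdim T"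
  shows "S = T"
  using dim_less_sub[OF assms(1) _ assms(3,4,5)] assms(2) by auto

lemma noninj:
  assumes A: "clin A" and S: "cvs.subspace S" "fdim S"
    and T: "cvs.subspace T" "fdim T" and AST: "A ` S \<subseteq> T" and lt: "cdim T < cdim S"
  shows "\<exists>x\<in>S. x \<noteq> 0 \<and> A x = 0"
proof (rule ccontr)
  assume "\<not> ?thesis"
  then have inj: "inj_on A S"
    using module_hom.inj_on_iff_eq_0[OF clin_module_hom[OF A] S(1)] by blast
  obtain B where B: "finite B" "\<not> cdependent B" "cspan B = S" "card B = cdim S"
    using basis_fin[OF S] by blast
  have BS: "B \<subseteq> S" using B(3) cvs.span_superset[of B] by blast
  have indA: "\<not> cdependent (A ` B)"
    using module_hom.independent_injective_image[OF clin_module_hom[OF A] B(2)] inj B(3) by simp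
  have cardA: "card (A ` B) = card B"
    using card_image[OF inj_on_subset[OF inj BS]] .
  obtain C where C: "finite C" "\<not> cdependent C" "cspan C = T" "card C = cdim T"
    using basis_fin[OF T] by blast
  have "A ` B \<subseteq> cspan C" using AST BS C(3) by blast
  then have "cdim (A ` B) \<le> card C" using C(1) by (rule cvs.dim_le_card)
  then have "card B \<le> cdim T" using cvs.dim_eq_card_independent[OF indA] cardA C(4) by simp
  then show False using lt B(4) by simp
qed

lemma finite_rank_sub:
  assumes "clin A" "finite F" "range A \<subseteq> cspan F"
  shows "finite_rank A"
proof -
  have "fdim (range A)" using assms unfolding fdim_def by (intro exI[of _ F]) simp
  then obtain B where B: "finite B" "cspan B = range A"
    using basis_fin[OF clin_subspace_range[OF assms(1)]] by metis
  show ?thesis unfolding finite_rank_def by (intro exI[of _ B] conjI B)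
qed

lemma finite_rank_fdim: "finite_rank A \<Longrightarrow> fdim (range A)"
proof -
  assume "finite_rank A"
  then obtain B where "finite B" "cspan B = range A" by (auto simp: finite_rank_def)
  then show ?thesis unfolding fdim_def by (intro exI[of _ B]) simp
qed

lemma has_rank_iff:
  assumes "clin A"
  shows "has_rank A k \<longleftrightarrow> finite_rank A \<and> cdim (range A) = k"
proof
  assume "has_rank A k"
  then obtain B where B: "finite B" "card B = k" "\<not> cdependent B" "cspan B = range A"
    by (auto simp: has_rank_def)
  then show "finite_rank A \<and> cdim (range A) = k"
    using cvs.dim_span_eq_card_independent[OF B(3)] by (auto simp: finite_rank_def)
next
  assume a: "finite_rank A \<and> cdim (range A) = k"
  then obtain B where "finite B" "\<not> cdependent B" "cspan B = range A" "card B = cdim (range A)"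
    using basis_fin[OF clin_subspace_range[OF assms] finite_rank_fdim] by blast
  then show "has_rank A k" using a by (auto simp: has_rank_def)
qed

section \<open>Closure properties of Fs\<close>

lemma Fs_clin: "A \<in> Fs \<Longrightarrow> clin A"
  by (simp add: Fs_def bounded_clinear_clin)

lemma Fs_add:
  assumes "A \<in> Fs" "B \<in> Fs"
  shows "(\<lambda>x. A x + B x) \<in> Fs"
proof -
  have cA: "clin A" and cB: "clin B" using assms by (auto simp: Fs_clin)
  have cl: "clin (\<lambda>x. A x + B x)"
    using cA cB by (simp add: clin_def scaleC_add_right algebra_simps)
  obtain K1 where K1: "\<forall>x. norm (A x) \<le> norm x * K1"
    using assms(1) by (auto simp: Fs_def bounded_clinear_def)
  obtain K2 where K2: "\<forall>x. norm (B x) \<le> norm x * K2"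
    using assms(2) by (auto simp: Fs_def bounded_clinear_def)
  have "norm (A x + B x) \<le> norm x * (K1 + K2)" for x
  proof -
    have "norm (A x + B x) \<le> norm (A x) + norm (B x)" by (rule norm_triangle_ineq)
    also have "\<dots> \<le> norm x * K1 + norm x * K2" using K1 K2 by (intro add_mono) auto
    finally show ?thesis by (simp add: distrib_left)
  qed
  then have bd: "bounded_clinear (\<lambda>x. A x + B x)"
    using cl unfolding bounded_clinear_def clin_def by blast
  have sa: "selfadjoint (\<lambda>x. A x + B x)"
    using assms by (simp add: Fs_def selfadjoint_def cinner_add_left cinner_add_right)
  obtain F1 where F1: "finite F1" "cspan F1 = range A"
    using assms(1) by (auto simp: Fs_def finite_rank_def)
  obtain F2 where F2: "finite F2" "cspan F2 = range B"
    using assms(2) by (auto simp: Fs_def finite_rank_def)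
  have "range (\<lambda>x. A x + B x) \<subseteq> cspan (F1 \<union> F2)"
  proof
    fix y assume "y \<in> range (\<lambda>x. A x + B x)"
    then obtain x where y: "y = A x + B x" by blast
    have "A x \<in> cspan (F1 \<union> F2)" using F1(2) cvs.span_mono[of F1 "F1 \<union> F2"] by blast
    moreover have "B x \<in> cspan (F1 \<union> F2)" using F2(2) cvs.span_mono[of F2 "F1 \<union> F2"] by blast
    ultimately show "y \<in> cspan (F1 \<union> F2)" using y by (simp add: cvs.span_add)
  qed
  then have "finite_rank (\<lambda>x. A x + B x)"
    using F1(1) F2(1) cl by (intro finite_rank_sub[of _ "F1 \<union> F2"]) auto
  then show ?thesis using bd sa by (simp add: Fs_def)
qed

lemma Fs_scale:
  assumes "A \<in> Fs"
  shows "(\<lambda>x. r *\<^sub>R A x) \<in> Fs"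
proof -
  have cA: "clin A" using assms by (auto simp: Fs_clin)
  have cl: "clin (\<lambda>x. r *\<^sub>R A x)"
    using cA by (simp add: clin_def scaleR_scaleC scaleC_add_right scaleC_scaleC mult.commute)
  obtain K1 where K1: "\<forall>x. norm (A x) \<le> norm x * K1"
    using assms(1) by (auto simp: Fs_def bounded_clinear_def)
  have "norm (r *\<^sub>R A x) \<le> norm x * (\<bar>r\<bar> * K1)" for x
  proof -
    have "norm (r *\<^sub>R A x) = \<bar>r\<bar> * norm (A x)" by simp
    also have "\<dots> \<le> \<bar>r\<bar> * (norm x * K1)" using K1 by (intro mult_left_mono) auto
    finally show ?thesis by (simp add: algebra_simps)
  qed
  then have bd: "bounded_clinear (\<lambda>x. r *\<^sub>R A x)"
    using cl unfolding bounded_clinear_def clin_def by blast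
  have sa: "selfadjoint (\<lambda>x. r *\<^sub>R A x)"
    using assms by (simp add: Fs_def selfadjoint_def cinner_scaleR_left cinner_scaleR_right)
  obtain F1 where F1: "finite F1" "cspan F1 = range A"
    using assms(1) by (auto simp: Fs_def finite_rank_def)
  have "range (\<lambda>x. r *\<^sub>R A x) \<subseteq> cspan F1"
  proof
    fix y assume "y \<in> range (\<lambda>x. r *\<^sub>R A x)"
    then obtain x where y: "y = r *\<^sub>R A x" by blast
    have "A x \<in> cspan F1" using F1(2) by blast
    then show "y \<in> cspan F1" using y by (simp add: scaleR_scaleC cvs.span_scale)
  qed
  then have "finite_rank (\<lambda>x. r *\<^sub>R A x)"
    using F1(1) cl by (intro finite_rank_sub[of _ F1]) auto
  then show ?thesis using bd sa by (simp add: Fs_def)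
qed

lemma proj_Fs: "is_projection P \<Longrightarrow> finite_rank P \<Longrightarrow> P \<in> Fs"
  unfolding Fs_def is_projection_def by (intro CollectI conjI) (elim conjE, assumption)+

lemma phi_comb:
  assumes "Fs_linear_map \<phi>" "A \<in> Fs" "B \<in> Fs"
  shows "\<phi> (\<lambda>x. A x + r *\<^sub>R B x) = (\<lambda>y. \<phi> A y + r *\<^sub>R \<phi> B y)"
proof -
  have "(\<lambda>x. r *\<^sub>R B x) \<in> Fs" using assms(3) by (rule Fs_scale)
  then have "\<phi> (\<lambda>x. A x + r *\<^sub>R B x) = (\<lambda>y. \<phi> A y + \<phi> (\<lambda>x. r *\<^sub>R B x) y)"
    using assms(1,2) unfolding Fs_linear_map_def by (elim conjE) (drule bspec, assumption, drule bspec, assumption)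
  also have "\<phi> (\<lambda>x. r *\<^sub>R B x) = (\<lambda>y. r *\<^sub>R \<phi> B y)"
    using assms(1,3) unfolding Fs_linear_map_def by (elim conjE) (drule bspec, assumption, erule allE)
  finally show ?thesis .
qed




lemma rank_close_aux:
  assumes Q: "is_projection Q" "finite_rank Q" and Q': "is_projection Q'" "finite_rank Q'"
    and close: "\<And>x. x \<noteq> 0 \<Longrightarrow> norm (Q x - Q' x) < norm x"
  shows "\<not> cdim (range Q') < cdim (range Q)"
proof
  assume lt: "cdim (range Q') < cdim (range Q)"
  have "\<exists>x\<in>range Q. x \<noteq> 0 \<and> Q' x = 0"
    by (rule noninj[OF proj_clin[OF Q'(1)] clin_subspace_range[OF proj_clin[OF Q(1)]]
          finite_rank_fdim[OF Q(2)] clin_subspace_range[OF proj_clin[OF Q'(1)]]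
          finite_rank_fdim[OF Q'(2)] _ lt]) auto
  then obtain x where x: "x \<in> range Q" "x \<noteq> 0" "Q' x = 0" by blast
  have "Q x = x" using x(1) proj_range[OF Q(1)] by blast
  then show False using close[OF x(2)] x(3) by simp
qed

lemma rank_close:
  assumes Q: "is_projection Q" "finite_rank Q" and Q': "is_projection Q'" "finite_rank Q'"
    and close: "\<And>x. x \<noteq> 0 \<Longrightarrow> norm (Q x - Q' x) < norm x"
  shows "cdim (range Q) = cdim (range Q')"
proof -
  have c2: "norm (Q' x - Q x) < norm x" if "x \<noteq> 0" for x
    using close[OF that] by (simp add: norm_minus_commute)
  show ?thesis
    using rank_close_aux[OF Q Q' close] rank_close_aux[OF Q' Q c2] by linarith
qed

lemma Fs_bound: "A \<in> Fs \<Longrightarrow> \<exists>K\<ge>0. \<forall>x. norm (A x) \<le> K * norm x"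
proof -
  assume "A \<in> Fs"
  then obtain K where K: "\<forall>x. norm (A x) \<le> norm x * K" by (auto simp: Fs_def bounded_clinear_def)
  have "norm (A x) \<le> \<bar>K\<bar> * norm x" for x
  proof -
    have "norm x * K \<le> \<bar>K\<bar> * norm x" by (simp add: mult.commute mult_right_mono)
    then show ?thesis using K by (meson order_trans)
  qed
  then show ?thesis by (intro exI[of _ "\<bar>K\<bar>"]) auto
qed

lemma path_const:
  fixes c1 c2 c3 :: "real \<Rightarrow> real" and A0 A1 A2 A3 :: "'b::complex_inner \<Rightarrow> 'b"
  defines "Q \<equiv> (\<lambda>t y. A0 y + c1 t *\<^sub>R A1 y + c2 t *\<^sub>R A2 y + c3 t *\<^sub>R A3 y)"
  assumes A: "A1 \<in> Fs" "A2 \<in> Fs" "A3 \<in> Fs"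
    and cont: "continuous_on {0..1} c1" "continuous_on {0..1} c2" "continuous_on {0..1} c3"
    and proj: "\<And>t. t \<in> {0..1} \<Longrightarrow> is_projection (Q t) \<and> finite_rank (Q t)"
  shows "cdim (range (Q 0)) = cdim (range (Q 1))"
proof -
  obtain K1 where K1: "K1 \<ge> 0" "\<forall>x. norm (A1 x) \<le> K1 * norm x" using Fs_bound[OF A(1)] by blast
  obtain K2 where K2: "K2 \<ge> 0" "\<forall>x. norm (A2 x) \<le> K2 * norm x" using Fs_bound[OF A(2)] by blast
  obtain K3 where K3: "K3 \<ge> 0" "\<forall>x. norm (A3 x) \<le> K3 * norm x" using Fs_bound[OF A(3)] by blast
  define M where "M = K1 + K2 + K3 + 1"
  have M: "M > 0" using K1 K2 K3 by (simp add: M_def)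
  define g where "g t = real (cdim (range (Q t)))" for t
  have loc: "\<exists>d>0. \<forall>t\<in>{0..1}. dist t s < d \<longrightarrow> g t = g s" if s: "s \<in> {0..1}" for s
  proof -
    have "\<exists>d>0. \<forall>t\<in>{0..1}. dist t s < d \<longrightarrow> dist (c t) (c s) < 1 / M"
      if "continuous_on {0..1} c" for c
      using that s M unfolding continuous_on_iff by simp
    from this[OF cont(1)] this[OF cont(2)] this[OF cont(3)]
    obtain d1 d2 d3 where d: "d1 > 0" "d2 > 0" "d3 > 0"
      "\<forall>t\<in>{0..1}. dist t s < d1 \<longrightarrow> dist (c1 t) (c1 s) < 1 / M"
      "\<forall>t\<in>{0..1}. dist t s < d2 \<longrightarrow> dist (c2 t) (c2 s) < 1 / M"
      "\<forall>t\<in>{0..1}. dist t s < d3 \<longrightarrow> dist (c3 t) (c3 s) < 1 / M"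
      by blast
    define d where "d = min d1 (min d2 d3)"
    have "g t = g s" if t: "t \<in> {0..1}" "dist t s < d" for t
    proof -
      have e1: "\<bar>c1 t - c1 s\<bar> < 1 / M" using d(4) t by (auto simp: d_def dist_real_def)
      have e2: "\<bar>c2 t - c2 s\<bar> < 1 / M" using d(5) t by (auto simp: d_def dist_real_def)
      have e3: "\<bar>c3 t - c3 s\<bar> < 1 / M" using d(6) t by (auto simp: d_def dist_real_def)
      have close: "norm (Q t x - Q s x) < norm x" if x: "x \<noteq> 0" for x
      proof -
        have nx: "norm x > 0" using x by simp
        have eq: "Q t x - Q s x = (c1 t - c1 s) *\<^sub>R A1 x + (c2 t - c2 s) *\<^sub>R A2 x + (c3 t - c3 s) *\<^sub>R A3 x"
          by (simp add: Q_def algebra_simps)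
        have "norm (Q t x - Q s x) \<le> norm ((c1 t - c1 s) *\<^sub>R A1 x) + norm ((c2 t - c2 s) *\<^sub>R A2 x)
              + norm ((c3 t - c3 s) *\<^sub>R A3 x)"
          unfolding eq by (meson add_mono norm_triangle_ineq order_trans order_refl)
        also have "\<dots> = \<bar>c1 t - c1 s\<bar> * norm (A1 x) + \<bar>c2 t - c2 s\<bar> * norm (A2 x)
              + \<bar>c3 t - c3 s\<bar> * norm (A3 x)" by simp
        also have "\<dots> \<le> (1 / M) * (K1 * norm x) + (1 / M) * (K2 * norm x) + (1 / M) * (K3 * norm x)"
          using e1 e2 e3 K1 K2 K3 M
          by (intro add_mono mult_mono) auto
        also have "\<dots> = ((K1 + K2 + K3) / M) * norm x" by (simp add: add_divide_distrib algebra_simps)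
        also have "\<dots> < 1 * norm x"
          using M nx by (intro mult_strict_right_mono) (auto simp: M_def)
        finally show ?thesis by simp
      qed
      have "cdim (range (Q t)) = cdim (range (Q s))"
        using rank_close[of "Q t" "Q s"] proj[OF t(1)] proj[OF s] close by blast
      then show ?thesis by (simp add: g_def)
    qed
    then show ?thesis using d by (intro exI[of _ d]) (auto simp: d_def)
  qed
  have "continuous_on {0..1} g"
    unfolding continuous_on_iff
  proof (intro ballI allI impI)
    fix s e :: real assume "s \<in> {0..1}" "0 < e"
    then obtain d where "d > 0" "\<forall>t\<in>{0..1}. dist t s < d \<longrightarrow> g t = g s" using loc by blast
    then show "\<exists>d>0. \<forall>t\<in>{0..1}. dist t s < d \<longrightarrow> dist (g t) (g s) < e"
      using \<open>0 < e\<close> by (intro exI[of _ d]) auto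
  qed
  moreover have "\<exists>e>0. \<forall>y. y \<in> {0..1} \<and> g y \<noteq> g x \<longrightarrow> e \<le> norm (g y - g x)" for x
  proof -
    have "1 \<le> norm (g y - g x)" if "g y \<noteq> g x" for y
    proof -
      have "cdim (range (Q y)) \<noteq> cdim (range (Q x))" using that by (simp add: g_def)
      then show ?thesis by (simp add: g_def)
    qed
    then show ?thesis by (intro exI[of _ 1]) auto
  qed
  ultimately have "g constant_on {0..1}"
    by (intro continuous_discrete_range_constant) auto
  then have "g 0 = g 1" by (auto simp: constant_on_def)
  then show ?thesis by (simp add: g_def)
qed




lemma coll4: "(t1::complex) *\<^sub>C w + t2 *\<^sub>C e + (t3 *\<^sub>C w + t4 *\<^sub>C e) = (t1 + t3) *\<^sub>C w + (t2 + t4) *\<^sub>C e"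
  by (simp add: scaleC_add_left ac_simps)

lemma rk1_comb:
  fixes a b :: real
  shows "rk1 (a *\<^sub>R w + b *\<^sub>R e) y =
    (a * a - a * b) *\<^sub>R rk1 w y + (b * b - a * b) *\<^sub>R rk1 e y + (a * b) *\<^sub>R rk1 (w + e) y"
proof -
  define p where "p = cinner w y"
  define q where "q = cinner e y"
  have L: "rk1 (a *\<^sub>R w + b *\<^sub>R e) y =
      (of_real a * (of_real a * p + of_real b * q)) *\<^sub>C w
    + (of_real b * (of_real a * p + of_real b * q)) *\<^sub>C e"
    by (simp add: rk1_def p_def q_def scaleR_scaleC cinner_add_left cinner_scaleC_left
          scaleC_add_right scaleC_scaleC mult.commute)
  have r1: "rk1 w y = p *\<^sub>C w" "rk1 e y = q *\<^sub>C e"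
    "rk1 (w + e) y = (p + q) *\<^sub>C w + (p + q) *\<^sub>C e"
    by (simp_all add: rk1_def p_def q_def cinner_add_left scaleC_add_right)
  have "(a * a - a * b) *\<^sub>R rk1 w y + (b * b - a * b) *\<^sub>R rk1 e y + (a * b) *\<^sub>R rk1 (w + e) y
     = (of_real (a * a - a * b) * p) *\<^sub>C w + (of_real (b * b - a * b) * q) *\<^sub>C e
       + ((of_real (a * b) * (p + q)) *\<^sub>C w + (of_real (a * b) * (p + q)) *\<^sub>C e)"
    unfolding r1 by (simp only: scaleR_scaleC scaleC_scaleC scaleC_add_right add.assoc)
  also have "\<dots> = (of_real (a * a - a * b) * p + of_real (a * b) * (p + q)) *\<^sub>C w
       + (of_real (b * b - a * b) * q + of_real (a * b) * (p + q)) *\<^sub>C e"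
    by (rule coll4)
  also have "\<dots> = (of_real a * (of_real a * p + of_real b * q)) *\<^sub>C w
    + (of_real b * (of_real a * p + of_real b * q)) *\<^sub>C e"
    by (simp add: algebra_simps)
  finally show ?thesis using L by simp
qed


lemma proj_zero: "is_projection (\<lambda>x::'a::complex_inner. 0)"
  by (simp add: is_projection_iff clin_def selfadjoint_def)

lemma norm_unit: "cinner u u = 1 \<Longrightarrow> norm u = 1"
  by (simp add: norm_cinner)

lemma unit_normalize:
  assumes "v \<noteq> 0"
  shows "cinner ((1 / norm v) *\<^sub>R v) ((1 / norm v) *\<^sub>R v) = 1"
proof -
  have "cinner ((1 / norm v) *\<^sub>R v) ((1 / norm v) *\<^sub>R v)
      = complex_of_real (1 / norm v) * complex_of_real (1 / norm v) * cinner v v"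
    by (simp add: cinner_scaleR_left cinner_scaleR_right)
  also have "\<dots> = complex_of_real ((1 / norm v) * (1 / norm v) * (norm v)\<^sup>2)"
    by (simp add: cinner_self_real)
  also have "(1 / norm v) * (1 / norm v) * (norm v)\<^sup>2 = 1"
    using assms by (simp add: power2_eq_square)
  finally show ?thesis by simp
qed

lemma rk1_range_sub: "range (rk1 u) \<subseteq> cspan {u}"
proof
  fix y assume "y \<in> range (rk1 u)"
  then obtain x where "y = cinner u x *\<^sub>C u" by (auto simp: rk1_def)
  then show "y \<in> cspan {u}" by (simp add: cvs.span_scale cvs.span_base)
qed

lemma rk1_unit:
  assumes "cinner u u = 1"
  shows "is_projection (rk1 u)" "rk1 u \<in> Fs"
proof -
  have "is_projection (\<lambda>x. (\<lambda>x. 0) x + rk1 u x)"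
    by (rule proj_add_rank1(1)[OF proj_zero assms]) simp
  then show p: "is_projection (rk1 u)" by simp
  have "finite_rank (rk1 u)"
    by (rule finite_rank_sub[OF clin_rk1 _ rk1_range_sub]) simp
  then show "rk1 u \<in> Fs" using p by (rule proj_Fs[rotated])
qed

lemma rk1_scaleR: "rk1 (r *\<^sub>R v) = (\<lambda>x. (r * r) *\<^sub>R rk1 v x)"
  by (simp add: fun_eq_iff rk1_def scaleR_scaleC cinner_scaleC_left scaleC_scaleC mult_ac)

lemma rk1_Fs:
  assumes "v \<noteq> 0"
  shows "rk1 v \<in> Fs"
proof -
  define u where "u = (1 / norm v) *\<^sub>R v"
  have u: "cinner u u = 1" using unit_normalize[OF assms] by (simp add: u_def)
  have "v = norm v *\<^sub>R u" using assms by (simp add: u_def)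
  then have "rk1 v = (\<lambda>x. (norm v * norm v) *\<^sub>R rk1 u x)"
    by (metis rk1_scaleR)
  then show ?thesis using Fs_scale[OF rk1_unit(2)[OF u]] by simp
qed




lemma proj_plus_unit_Pk:
  assumes R: "is_projection R" "finite_rank R" "Suc (cdim (range R)) = k"
    and u: "cinner u u = 1" "R u = 0"
  shows "(\<lambda>y. R y + rk1 u y) \<in> Pk k"
proof -
  have p: "is_projection (\<lambda>y. R y + rk1 u y)" by (rule proj_add_rank1(1)[OF R(1) u])
  have rg: "range (\<lambda>y. R y + rk1 u y) = cspan (insert u (range R))"
    by (rule proj_add_rank1(2)[OF R(1) u])
  obtain F where F: "finite F" "cspan F = range R" using R(2) by (auto simp: finite_rank_def)
  have "insert u (range R) \<subseteq> cspan (insert u F)"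
    using F(2) cvs.span_mono[of F "insert u F"] cvs.span_superset[of "insert u F"] by auto
  then have "range (\<lambda>y. R y + rk1 u y) \<subseteq> cspan (insert u F)"
    unfolding rg using cvs.span_minimal by blast
  then have fr: "finite_rank (\<lambda>y. R y + rk1 u y)"
    using F(1) by (intro finite_rank_sub[OF proj_clin[OF p]]) auto
  have "u \<notin> range R"
  proof
    assume "u \<in> range R"
    then have "R u = u" using proj_range[OF R(1)] by blast
    then show False using u by simp
  qed
  then have "cdim (cspan (insert u (range R))) = Suc (cdim (range R))"
    by (intro dim_insert_sub clin_subspace_range proj_clin R(1) finite_rank_fdim R(2))
  then have "has_rank (\<lambda>y. R y + rk1 u y) k"
    using has_rank_iff[OF proj_clin[OF p]] fr rg R(3) by simp
  then show ?thesis using p by (simp add: Pk_def)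
qed

lemma step_path:
  assumes phi: "Fs_linear_map \<phi>" "\<phi> ` Pk k \<subseteq> Pf"
    and R: "is_projection R" "finite_rank R" "Suc (cdim (range R)) = k"
    and w: "cinner w w = 1" "R w = 0" and e: "cinner e e = 1" "R e = 0"
    and ind: "\<And>a b::real. a *\<^sub>R w + b *\<^sub>R e = 0 \<Longrightarrow> a = 0 \<and> b = 0"
  shows "cdim (range (\<phi> (\<lambda>y. R y + rk1 w y))) = cdim (range (\<phi> (\<lambda>y. R y + rk1 e y)))"
proof -
  have cR: "clin R" using R(1) by (rule proj_clin)
  define x where "x t = (1 - t) *\<^sub>R w + t *\<^sub>R e" for t :: real
  have xnz: "x t \<noteq> 0" for t
  proof
    assume "x t = 0"
    then have "1 - t = 0 \<and> t = 0" using ind[of "1 - t" t] unfolding x_def by blast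
    then show False by linarith
  qed
  define n where "n t = norm (x t)" for t
  have npos: "n t \<noteq> 0" for t using xnz by (simp add: n_def)
  define a where "a t = (1 - t) / n t" for t
  define b where "b t = t / n t" for t
  define u where "u t = a t *\<^sub>R w + b t *\<^sub>R e" for t
  have ux: "u t = (1 / n t) *\<^sub>R x t" for t
    by (simp add: u_def x_def a_def b_def scaleR_add_right)
  have uu: "cinner (u t) (u t) = 1" for t
    unfolding ux n_def by (rule unit_normalize[OF xnz])
  have Ru: "R (u t) = 0" for t
    by (simp add: u_def clin_add[OF cR] clin_scaleR[OF cR] w e)
  define c1 where "c1 t = a t * a t - a t * b t" for t
  define c2 where "c2 t = b t * b t - a t * b t" for t
  define c3 where "c3 t = a t * b t" for t
  have we: "w + e \<noteq> 0" using ind[of 1 1] by auto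
  have Fs: "R \<in> Fs" "rk1 w \<in> Fs" "rk1 e \<in> Fs" "rk1 (w + e) \<in> Fs"
    using proj_Fs[OF R(1,2)] rk1_unit(2)[OF w(1)] rk1_unit(2)[OF e(1)] rk1_Fs[OF we] by auto
  have decomp: "(\<lambda>y. R y + rk1 (u t) y) =
     (\<lambda>y. R y + c1 t *\<^sub>R rk1 w y + c2 t *\<^sub>R rk1 e y + c3 t *\<^sub>R rk1 (w + e) y)" for t
    by (simp add: fun_eq_iff u_def rk1_comb c1_def c2_def c3_def add.assoc)
  have phidec: "\<phi> (\<lambda>y. R y + rk1 (u t) y) =
     (\<lambda>y. \<phi> R y + c1 t *\<^sub>R \<phi> (rk1 w) y + c2 t *\<^sub>R \<phi> (rk1 e) y + c3 t *\<^sub>R \<phi> (rk1 (w + e)) y)" for t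
  proof -
    have f1: "(\<lambda>y. R y + c1 t *\<^sub>R rk1 w y) \<in> Fs" using Fs by (intro Fs_add Fs_scale) auto
    have f2: "(\<lambda>y. R y + c1 t *\<^sub>R rk1 w y + c2 t *\<^sub>R rk1 e y) \<in> Fs"
      using Fs f1 Fs_add[OF f1 Fs_scale[OF Fs(3)]] by simp
    have "\<phi> (\<lambda>y. R y + c1 t *\<^sub>R rk1 w y + c2 t *\<^sub>R rk1 e y + c3 t *\<^sub>R rk1 (w + e) y)
      = (\<lambda>y. \<phi> (\<lambda>y. R y + c1 t *\<^sub>R rk1 w y + c2 t *\<^sub>R rk1 e y) y + c3 t *\<^sub>R \<phi> (rk1 (w + e)) y)"
      using phi_comb[OF phi(1) f2 Fs(4)] .
    also have "\<phi> (\<lambda>y. R y + c1 t *\<^sub>R rk1 w y + c2 t *\<^sub>R rk1 e y)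
      = (\<lambda>y. \<phi> (\<lambda>y. R y + c1 t *\<^sub>R rk1 w y) y + c2 t *\<^sub>R \<phi> (rk1 e) y)"
      using phi_comb[OF phi(1) f1 Fs(3)] .
    also have "\<phi> (\<lambda>y. R y + c1 t *\<^sub>R rk1 w y) = (\<lambda>y. \<phi> R y + c1 t *\<^sub>R \<phi> (rk1 w) y)"
      using phi_comb[OF phi(1) Fs(1) Fs(2)] .
    finally show ?thesis unfolding decomp .
  qed
  have phiFs: "\<phi> A \<in> Fs" if "A \<in> Fs" for A
    using phi(1) that unfolding Fs_linear_map_def by blast
  have inPk: "(\<lambda>y. R y + rk1 (u t) y) \<in> Pk k" for t
    by (rule proj_plus_unit_Pk[OF R uu Ru])
  have inPf: "\<phi> (\<lambda>y. R y + rk1 (u t) y) \<in> Pf" for t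
    using phi(2) inPk[of t] by blast
  have nc: "continuous_on {0..1} n"
    unfolding n_def x_def by (intro continuous_intros)
  have ac: "continuous_on {0..1} a" unfolding a_def
    using nc npos by (intro continuous_intros) auto
  have bc: "continuous_on {0..1} b" unfolding b_def
    using nc npos by (intro continuous_intros) auto
  have cc: "continuous_on {0..1} c1" "continuous_on {0..1} c2" "continuous_on {0..1} c3"
    unfolding c1_def c2_def c3_def using ac bc by (auto intro!: continuous_intros)
  have main: "cdim (range ((\<lambda>t y. \<phi> R y + c1 t *\<^sub>R \<phi> (rk1 w) y + c2 t *\<^sub>R \<phi> (rk1 e) y
        + c3 t *\<^sub>R \<phi> (rk1 (w + e)) y) 0))
      = cdim (range ((\<lambda>t y. \<phi> R y + c1 t *\<^sub>R \<phi> (rk1 w) y + c2 t *\<^sub>R \<phi> (rk1 e) y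
        + c3 t *\<^sub>R \<phi> (rk1 (w + e)) y) 1))"
  proof (rule path_const[OF phiFs[OF Fs(2)] phiFs[OF Fs(3)] phiFs[OF Fs(4)] cc])
    fix t :: real assume "t \<in> {0..1}"
    show "is_projection ((\<lambda>t y. \<phi> R y + c1 t *\<^sub>R \<phi> (rk1 w) y + c2 t *\<^sub>R \<phi> (rk1 e) y
        + c3 t *\<^sub>R \<phi> (rk1 (w + e)) y) t) \<and>
      finite_rank ((\<lambda>t y. \<phi> R y + c1 t *\<^sub>R \<phi> (rk1 w) y + c2 t *\<^sub>R \<phi> (rk1 e) y
        + c3 t *\<^sub>R \<phi> (rk1 (w + e)) y) t)"
      using inPf[of t] unfolding phidec[symmetric] by (simp add: Pf_def)
  qed
  have n0: "n 0 = 1" using norm_unit[OF w(1)] by (simp add: n_def x_def)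
  have n1: "n 1 = 1" using norm_unit[OF e(1)] by (simp add: n_def x_def)
  have u0: "u 0 = w" by (simp add: u_def a_def b_def n0)
  have u1: "u 1 = e" by (simp add: u_def a_def b_def n1)
  show ?thesis using main unfolding phidec[symmetric] by (simp add: u0 u1 del: phidec)
qed




lemma proj_unique:
  assumes P: "is_projection P" and Q: "is_projection Q" and rg: "range P = range Q"
  shows "P = Q"
proof
  fix x
  show "P x = Q x"
  proof (rule cinner_ext)
    fix z
    have QP: "Q (P x) = P x" using rg proj_range[OF Q, of "P x"] by auto
    have PQ: "P (Q z) = Q z" using rg proj_range[OF P, of "Q z"] by auto
    have "cinner z (P x) = cinner z (Q (P x))" using QP by simp
    also have "\<dots> = cinner (Q z) (P x)" using proj_sa[OF Q] by simp
    also have "\<dots> = cinner (P (Q z)) x" using proj_sa[OF P] by simp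
    also have "\<dots> = cinner (Q z) x" using PQ by simp
    also have "\<dots> = cinner z (Q x)" using proj_sa[OF Q] by simp
    finally show "cinner z (P x) = cinner z (Q x)" .
  qed
qed

lemma Pk_facts:
  assumes "P \<in> Pk k"
  shows "is_projection P" "finite_rank P" "cdim (range P) = k" "cvs.subspace (range P)" "fdim (range P)"
proof -
  show p: "is_projection P" using assms by (simp add: Pk_def)
  have "has_rank P k" using assms by (simp add: Pk_def)
  then show fr: "finite_rank P" "cdim (range P) = k" using has_rank_iff[OF proj_clin[OF p]] by auto
  show "cvs.subspace (range P)" by (rule clin_subspace_range[OF proj_clin[OF p]])
  show "fdim (range P)" by (rule finite_rank_fdim[OF fr(1)])
qed

lemma chain_step:
  assumes phi: "Fs_linear_map \<phi>" "\<phi> ` Pk k \<subseteq> Pf"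
    and P: "P \<in> Pk k" and Q: "Q \<in> Pk k" and ne: "range P \<noteq> range Q"
  shows "\<exists>P'\<in>Pk k. cdim (range (\<phi> P')) = cdim (range (\<phi> P)) \<and>
           cdim (range P \<inter> range Q) < cdim (range P' \<inter> range Q)"
proof -
  note Pf = Pk_facts[OF P] and Qf = Pk_facts[OF Q]
  have cP: "clin P" and cQ: "clin Q" using Pf(1) Qf(1) by (auto simp: proj_clin)
  obtain u where u: "u \<in> range P" "u \<notin> range Q"
  proof -
    have "\<not> range P \<subseteq> range Q"
      using dim_eq_sub[of "range P" "range Q"] Pf Qf ne by auto
    then show ?thesis using that by blast
  qed
  obtain v where v: "v \<in> range Q" "v \<notin> range P"
  proof -
    have "\<not> range Q \<subseteq> range P"
      using dim_eq_sub[of "range Q" "range P"] Pf Qf ne by auto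
    then show ?thesis using that by blast
  qed
  have Pu: "P u = u" using u(1) proj_range[OF Pf(1)] by blast
  define y where "y = u - P (Q u)"
  have yU: "P y = y" by (simp add: y_def clin_diff[OF cP] Pu proj_idem[OF Pf(1)])
  have ynz: "y \<noteq> 0"
  proof
    assume "y = 0"
    then have uPQ: "u = P (Q u)" by (simp add: y_def)
    have "norm u \<le> norm (Q u)" using proj_norm[OF Pf(1), of "Q u"] uPQ by simp
    moreover have "(norm u)\<^sup>2 = (norm (Q u))\<^sup>2 + (norm (u - Q u))\<^sup>2"
      by (rule pythagoras_proj[OF Qf(1)])
    ultimately have "(norm (u - Q u))\<^sup>2 \<le> 0"
      by (smt (verit) norm_ge_zero power_mono)
    then have "Q u = u" by simp
    then show False using u(2) by (metis rangeI)
  qed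
  have yperp: "cinner z y = 0" if "z \<in> range P \<inter> range Q" for z
  proof -
    have Pz: "P z = z" and Qz: "Q z = z" using that proj_range[OF Pf(1)] proj_range[OF Qf(1)] by auto
    have "cinner z (P (Q u)) = cinner z u"
      using proj_sa[OF Pf(1), of z "Q u"] proj_sa[OF Qf(1), of z u] Pz Qz by simp
    then show ?thesis by (simp add: y_def cinner_diff_right)
  qed
  define w where "w = (1 / norm y) *\<^sub>R y"
  have ww: "cinner w w = 1" unfolding w_def by (rule unit_normalize[OF ynz])
  have Pw: "P w = w" by (simp add: w_def clin_scaleR[OF cP] yU)
  have wperp: "cinner w z = 0" if "z \<in> range P \<inter> range Q" for z
  proof -
    have "cinner z w = 0" using yperp[OF that] by (simp add: w_def cinner_scaleR_right)
    then show ?thesis using cinner_commute[of w z] by simp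
  qed
  define PR where "PR x = P x - rk1 w x" for x
  have wP: "cinner w (P x) = cinner w x" for x using proj_sa[OF Pf(1), of w x] Pw by simp
  have cPR: "clin PR"
    using cP clin_rk1[of w] unfolding clin_def PR_def by (simp add: scaleC_diff_right)
  have PRproj: "is_projection PR"
    unfolding is_projection_iff
  proof (intro conjI allI cPR)
    show "selfadjoint PR"
      using Pf(1) selfadjoint_rk1[of w]
      by (simp add: PR_def selfadjoint_def cinner_diff_left cinner_diff_right proj_sa)
    fix x
    show "PR (PR x) = PR x"
      by (simp add: PR_def rk1_def clin_diff[OF cP] clin_scaleC[OF cP] proj_idem[OF Pf(1)] Pw wP
          cinner_diff_right cinner_scaleC_right ww)
  qed
  have PRw: "PR w = 0" by (simp add: PR_def rk1_def Pw ww)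
  have Peq: "P = (\<lambda>x. PR x + rk1 w x)" by (simp add: fun_eq_iff PR_def)
  have PRsub: "range PR \<subseteq> range P"
  proof
    fix z assume "z \<in> range PR"
    then obtain x where z: "z = PR x" by blast
    have "P z = z" by (simp add: z PR_def rk1_def clin_diff[OF cP] clin_scaleC[OF cP] proj_idem[OF Pf(1)] Pw)
    then show "z \<in> range P" by (metis rangeI)
  qed
  have PRfr: "finite_rank PR"
  proof -
    obtain F where F: "finite F" "cspan F = range P" using Pf(2) by (auto simp: finite_rank_def)
    show ?thesis using F PRsub by (intro finite_rank_sub[OF cPR F(1)]) auto
  qed
  have wR: "w \<notin> range PR"
  proof
    assume "w \<in> range PR"
    then have "PR w = w" using proj_range[OF PRproj] by blast
    then show False using PRw ww by simp
  qed
  have rgP: "range P = cspan (insert w (range PR))"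
    unfolding Peq by (rule proj_add_rank1(2)[OF PRproj ww PRw])
  have dimR: "Suc (cdim (range PR)) = k"
  proof -
    have "cdim (cspan (insert w (range PR))) = Suc (cdim (range PR))"
      by (intro dim_insert_sub clin_subspace_range cPR finite_rank_fdim PRfr wR)
    then show ?thesis using rgP Pf(3) by simp
  qed
  have IntR: "range P \<inter> range Q \<subseteq> range PR"
  proof
    fix z assume z: "z \<in> range P \<inter> range Q"
    have "PR z = z" using z wperp[OF z] proj_range[OF Pf(1)] by (auto simp: PR_def rk1_def)
    then show "z \<in> range PR" by (metis rangeI)
  qed
  define z0 where "z0 = v - PR v"
  have PRz0: "PR z0 = 0" by (simp add: z0_def clin_diff[OF cPR] proj_idem[OF PRproj])
  have z0nz: "z0 \<noteq> 0"
  proof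
    assume "z0 = 0"
    then have "v = PR v" by (simp add: z0_def)
    then have "v \<in> range PR" by (metis rangeI)
    then show False using v(2) PRsub by blast
  qed
  define e where "e = (1 / norm z0) *\<^sub>R z0"
  have ee: "cinner e e = 1" unfolding e_def by (rule unit_normalize[OF z0nz])
  have PRe: "PR e = 0" by (simp add: e_def clin_scaleR[OF cPR] PRz0)
  have veq: "v = PR v + norm z0 *\<^sub>R e" using z0nz by (simp add: e_def z0_def)
  have subP: "cvs.subspace (range P)" by (rule Pf(4))
  have eU: "e \<notin> range P"
  proof
    assume "e \<in> range P"
    then have "norm z0 *\<^sub>R e \<in> range P"
      using cvs.subspace_scale[OF subP] by (simp add: scaleR_scaleC)
    moreover have "PR v \<in> range P" using PRsub by blast
    ultimately have "v \<in> range P" using veq cvs.subspace_add[OF subP] by metis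
    then show False using v(2) by blast
  qed
  have wU: "w \<in> range P" using Pw by (metis rangeI)
  have ind: "a = 0 \<and> b = 0" if ab: "a *\<^sub>R w + b *\<^sub>R e = 0" for a b :: real
  proof -
    have b0: "b = 0"
    proof (rule ccontr)
      assume bnz: "b \<noteq> 0"
      have be: "b *\<^sub>R e = - (a *\<^sub>R w)"
        using ab by (simp add: eq_neg_iff_add_eq_0 add.commute)
      have "e = (1 / b) *\<^sub>R (b *\<^sub>R e)" using bnz by simp
      also have "\<dots> = (- a / b) *\<^sub>R w" unfolding be by simp
      finally have "e = (- a / b) *\<^sub>R w" .
      then have "e = complex_of_real (- a / b) *\<^sub>C w" by (simp only: scaleR_scaleC)
      then have "e \<in> range P"
        using cvs.subspace_scale[OF subP wU, of "complex_of_real (- a / b)"] by (simp only:)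
      then show False using eU by blast
    qed
    then have "a *\<^sub>R w = 0" using ab by simp
    moreover have "w \<noteq> 0" using ww by auto
    ultimately show ?thesis using b0 by simp
  qed
  define P' where "P' = (\<lambda>x. PR x + rk1 e x)"
  have P'Pk: "P' \<in> Pk k" unfolding P'_def by (rule proj_plus_unit_Pk[OF PRproj PRfr dimR ee PRe])
  have rk: "cdim (range (\<phi> P)) = cdim (range (\<phi> P'))"
    unfolding Peq P'_def by (rule step_path[OF phi PRproj PRfr dimR ww PRw ee PRe ind])
  have rgP': "range P' = cspan (insert e (range PR))"
    unfolding P'_def by (rule proj_add_rank1(2)[OF PRproj ee PRe])
  note P'f = Pk_facts[OF P'Pk]
  have vP': "v \<in> range P'"
  proof -
    have "PR v \<in> cspan (insert e (range PR))" by (rule cvs.span_base) simp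
    moreover have "norm z0 *\<^sub>R e \<in> cspan (insert e (range PR))"
      unfolding scaleR_scaleC by (rule cvs.span_scale, rule cvs.span_base) simp
    ultimately have "PR v + norm z0 *\<^sub>R e \<in> cspan (insert e (range PR))" by (rule cvs.span_add)
    then show ?thesis using veq rgP' by simp
  qed
  have sub1: "range P \<inter> range Q \<subseteq> range P' \<inter> range Q"
    using IntR rgP' cvs.span_superset[of "insert e (range PR)"] by blast
  have neq: "range P \<inter> range Q \<noteq> range P' \<inter> range Q" using vP' v by blast
  have "cdim (range P \<inter> range Q) < cdim (range P' \<inter> range Q)"
  proof (rule dim_less_sub[OF sub1 neq])
    show "cvs.subspace (range P \<inter> range Q)" by (intro cvs.subspace_inter Pf(4) Qf(4))
    show "cvs.subspace (range P' \<inter> range Q)" by (intro cvs.subspace_inter P'f(4) Qf(4))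
    show "fdim (range P' \<inter> range Q)" using Qf(5) fdim_subset by blast
  qed
  then show ?thesis using P'Pk rk by auto
qed




lemma all_equal:
  assumes phi: "Fs_linear_map \<phi>" "\<phi> ` Pk k \<subseteq> Pf"
  shows "P \<in> Pk k \<Longrightarrow> Q \<in> Pk k \<Longrightarrow> cdim (range (\<phi> P)) = cdim (range (\<phi> Q))"
proof (induction "k - cdim (range P \<inter> range Q)" arbitrary: P rule: less_induct)
  case less
  show ?case
  proof (cases "range P = range Q")
    case True
    then have "P = Q" using proj_unique Pk_facts(1)[OF less.prems(1)] Pk_facts(1)[OF less.prems(2)] by blast
    then show ?thesis by simp
  next
    case False
    obtain P' where P': "P' \<in> Pk k" "cdim (range (\<phi> P')) = cdim (range (\<phi> P))"
      "cdim (range P \<inter> range Q) < cdim (range P' \<inter> range Q)"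
      using chain_step[OF phi less.prems False] by blast
    note Qf = Pk_facts[OF less.prems(2)]
    have "cdim (range P' \<inter> range Q) \<le> cdim (range Q)"
      by (rule dim_le_sub[OF _ Qf(4) Qf(5)]) blast
    then have "k - cdim (range P' \<inter> range Q) < k - cdim (range P \<inter> range Q)"
      using P'(3) Qf(3) by linarith
    then have "cdim (range (\<phi> P')) = cdim (range (\<phi> Q))"
      using less.hyps P'(1) less.prems(2) by blast
    then show ?thesis using P'(2) by simp
  qed
qed

theorem proposition4p1:
  fixes \<phi> :: "('a::chilbert_space \<Rightarrow> 'a) \<Rightarrow> ('b::chilbert_space \<Rightarrow> 'b)"
    and k :: nat
  assumes "0 < k"
    and "dim_greater TYPE('a) k"
    and "Fs_linear_map \<phi>"
    and "\<phi> ` Pk k \<subseteq> Pf"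
  shows "\<exists>m::nat. dim_at_least TYPE('b) m \<and> \<phi> ` (Pk k :: ('a \<Rightarrow> 'a) set) \<subseteq> Pk m"
proof (cases "(Pk k :: ('a \<Rightarrow> 'a) set) = {}")
  case True
  have "dim_at_least TYPE('b) 0"
    unfolding dim_at_least_def using cvs.independent_empty by (intro exI[of _ "{}"]) auto
  then show ?thesis using True by blast
next
  case False
  then obtain P0 :: "'a \<Rightarrow> 'a" where P0: "P0 \<in> Pk k" by blast
  have rk: "has_rank (\<phi> Q) (cdim (range (\<phi> P0)))" if Q: "Q \<in> Pk k" for Q
  proof -
    have "\<phi> Q \<in> Pf" using assms(4) Q by blast
    then have p: "is_projection (\<phi> Q)" and fr: "finite_rank (\<phi> Q)" by (auto simp: Pf_def)
    have "cdim (range (\<phi> Q)) = cdim (range (\<phi> P0))"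
      using all_equal[OF assms(3,4) Q P0] .
    then show ?thesis using has_rank_iff[OF proj_clin[OF p]] fr by simp
  qed
  have "dim_at_least TYPE('b) (cdim (range (\<phi> P0)))"
    using rk[OF P0] unfolding has_rank_def dim_at_least_def by blast
  moreover have "\<phi> ` Pk k \<subseteq> Pk (cdim (range (\<phi> P0)))"
  proof
    fix A assume "A \<in> \<phi> ` Pk k"
    then obtain Q where Q: "Q \<in> Pk k" "A = \<phi> Q" by blast
    have "\<phi> Q \<in> Pf" using assms(4) Q by blast
    then show "A \<in> Pk (cdim (range (\<phi> P0)))" using rk[OF Q(1)] Q(2) by (simp add: Pk_def Pf_def)
  qed
  ultimately show ?thesis by blast
qed


end
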